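(* Fix any configuration of open and closed sites on $\mathcal{L}$, and let $\tau=\inf\{n\ge0:\xi_n=\emptyset\}$. Then $$\tau=\inf\{m\ge0:\underline{\ell}_m>\overline{u}_m\}.$$
   Context: Let $\mathcal{L}=\{(n,m)\in\mathbb{Z}^2:n\ge0,\ n+m\text{ even}\}$. Each site of $\mathcal{L}$ is open or closed. For $z,z'\in\mathcal{L}$ write $z\to z'$ if there exist $k\ge0$ and sites $z=z_0,\dots,z_k=z'$ of $\mathcal{L}$ such that $z_0,\dots,z_{k-1}$ are open and $z_{i+1}-z_i\in\{(1,1),(2,0),(1,-1)\}$ for every $i$. Let $o=(0,0)$. Use the conventions $\sup\emptyset=-\infty$ and $\inf\emptyset=+\infty$. Define $\xi_n=\{x:o\to(n,x)\}$. Set $\overline{u}_0=\underline{\ell}_0=0$. For $n\ge1$, let $$\overline{\xi}_n=\{x:\exists y\le0\text{ such that }(0,y)\to(n,x)\text{ or }(1,y)\to(n,x)\}$$ and $\overline{u}_n=\sup\overline{\xi}_n$. Let $$\underline{\xi}_n=\{x:\exists y\ge0\text{ such that }(0,y)\to(n,x)\text{ or }(1,y)\to(n,x)\}$$ and $\underline{\ell}_n=\inf\underline{\xi}_n$. In all these definitions only sites of $\mathcal{L}$ are considered. *)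

theory Defs
  imports Main "HOL-Library.Extended_Real" "HOL-Library.Extended_Nat"
begin

definition inL :: "int \<times> int \<Rightarrow> bool" where
  "inL z \<longleftrightarrow> fst z \<ge> 0 \<and> even (fst z + snd z)"

definition steps :: "(int \<times> int) set" where
  "steps = {(1,1), (2,0), (1,-1)}"

text \<open>A configuration is a predicate omega; omega z means site z is open.
  reach omega z z' formalizes z -> z': a path z = z_0, ..., z_k = z' of sites of L
  with z_0..z_{k-1} open and increments in steps (k = 0 allowed).\<close>
inductive reach :: "(int \<times> int \<Rightarrow> bool) \<Rightarrow> int \<times> int \<Rightarrow> int \<times> int \<Rightarrow> bool"
  for \<omega> where
  refl: "inL z \<Longrightarrow> reach \<omega> z z"
| step: "inL z \<Longrightarrow> \<omega> z \<Longrightarrow> inL z' \<Longrightarrow> (fst z' - fst z, snd z' - snd z) \<in> steps \<Longrightarrow> reach \<omega> z' z''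
          \<Longrightarrow> reach \<omega> z z''"

definition xi :: "(int \<times> int \<Rightarrow> bool) \<Rightarrow> nat \<Rightarrow> int set" where
  "xi \<omega> n = {x. reach \<omega> (0,0) (int n, x)}"

definition xi_upper :: "(int \<times> int \<Rightarrow> bool) \<Rightarrow> nat \<Rightarrow> int set" where
  "xi_upper \<omega> n = {x. \<exists>y\<le>0. reach \<omega> (0,y) (int n, x) \<or> reach \<omega> (1,y) (int n, x)}"

definition xi_lower :: "(int \<times> int \<Rightarrow> bool) \<Rightarrow> nat \<Rightarrow> int set" where
  "xi_lower \<omega> n = {x. \<exists>y\<ge>0. reach \<omega> (0,y) (int n, x) \<or> reach \<omega> (1,y) (int n, x)}"

text \<open>Sup {} = -infinity, Inf {} = +infinity in ereal.\<close>
definition u_bar :: "(int \<times> int \<Rightarrow> bool) \<Rightarrow> nat \<Rightarrow> ereal" where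
  "u_bar \<omega> n = (if n = 0 then 0 else Sup ((\<lambda>x. ereal (real_of_int x)) ` xi_upper \<omega> n))"

definition l_bar :: "(int \<times> int \<Rightarrow> bool) \<Rightarrow> nat \<Rightarrow> ereal" where
  "l_bar \<omega> n = (if n = 0 then 0 else Inf ((\<lambda>x. ereal (real_of_int x)) ` xi_lower \<omega> n))"

end

theory Submission
  imports Defs
begin

lemma reach_inL: "reach \<omega> a b \<Longrightarrow> inL a \<and> inL b"
  by (induction rule: reach.induct) auto

lemma reach_trans: "reach \<omega> a b \<Longrightarrow> reach \<omega> b c \<Longrightarrow> reach \<omega> a c"
  by (induction rule: reach.induct) (auto intro: reach.step)

lemma reach_last: "reach \<omega> a b \<Longrightarrow> a = b \<or> (\<exists>q. reach \<omega> a q \<and> \<omega> q \<and> inL q \<and> (fst b - fst q, snd b - snd q) \<in> steps)"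
proof (induction rule: reach.induct)
  case (refl z) then show ?case by simp
next
  case (step z z' z'')
  from step.IH show ?case
  proof
    assume "z' = z''" then show ?thesis using step.hyps reach.refl[of z \<omega>] by blast
  next
    assume "\<exists>q. reach \<omega> z' q \<and> \<omega> q \<and> inL q \<and> (fst z'' - fst q, snd z'' - snd q) \<in> steps"
    then obtain q where "reach \<omega> z' q" "\<omega> q" "inL q" "(fst z'' - fst q, snd z'' - snd q) \<in> steps" by blast
    moreover have "reach \<omega> z q" using step.hyps \<open>reach \<omega> z' q\<close> by (auto intro: reach.step)
    ultimately show ?thesis by blast
  qed
qed

lemma steps_iff: "(a,b) \<in> steps \<longleftrightarrow> (a = 1 \<and> b = 1) \<or> (a = 2 \<and> b = 0) \<or> (a = 1 \<and> b = -1)"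
  by (auto simp: steps_def)

lemma O_level0: "reach \<omega> (0,0) (0,y) \<Longrightarrow> y = 0"
proof -
  assume r: "reach \<omega> (0,0) (0,y)"
  from reach_last[OF r] show "y = 0"
  proof
    assume "(0::int,0::int) = (0,y)" then show ?thesis by simp
  next
    assume "\<exists>q. reach \<omega> (0, 0) q \<and> \<omega> q \<and> inL q \<and> (fst (0::int,y) - fst q, snd (0::int,y) - snd q) \<in> steps"
    then obtain q where "inL q" "(0 - fst q, y - snd q) \<in> steps" by auto
    then show ?thesis by (auto simp: inL_def steps_iff)
  qed
qed

inductive Vs :: "(int \<times> int \<Rightarrow> bool) \<Rightarrow> int \<times> int \<Rightarrow> bool" for \<omega> where
  vstart: "inL s \<Longrightarrow> fst s \<in> {0,1} \<Longrightarrow> snd s \<le> 0 \<Longrightarrow> \<not> reach \<omega> (0,0) s \<Longrightarrow> Vs \<omega> s"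
| vstep: "Vs \<omega> s \<Longrightarrow> \<omega> s \<Longrightarrow> inL s' \<Longrightarrow> (fst s' - fst s, snd s' - snd s) \<in> steps
          \<Longrightarrow> \<not> reach \<omega> (0,0) s' \<Longrightarrow> Vs \<omega> s'"

lemma Vs_inL: "Vs \<omega> s \<Longrightarrow> inL s"
  by (induction rule: Vs.induct) auto

lemma Vs_notO: "Vs \<omega> s \<Longrightarrow> \<not> reach \<omega> (0,0) s"
  by (induction rule: Vs.induct) auto

lemma Vs_low: "Vs \<omega> s \<Longrightarrow> fst s \<le> 1 \<Longrightarrow> snd s \<le> fst s - 2"
proof (induction rule: Vs.induct)
  case (vstart s)
  obtain a b where s: "s = (a,b)" by force
  have "s \<noteq> (0,0)" using vstart.hyps(4) reach.refl[of "(0,0)"] by (auto simp: inL_def)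
  then show ?case using vstart.hyps s by (auto simp: inL_def; presburger)
next
  case (vstep s s')
  have "inL s" using vstep.hyps(1) by (rule Vs_inL)
  then show ?case using vstep by (auto simp: inL_def steps_iff)
qed

lemma Vs_pred: "Vs \<omega> s \<Longrightarrow> fst s \<ge> 2 \<Longrightarrow> \<exists>p. Vs \<omega> p \<and> \<omega> p \<and> (fst s - fst p, snd s - snd p) \<in> steps"
proof (erule Vs.cases)
  fix s' assume "s = s'" "inL s'" "fst s' \<in> {0,1}" "fst s \<ge> 2"
  then show ?thesis by auto
next
  fix p s' assume h: "s = s'" "Vs \<omega> p" "\<omega> p" "(fst s' - fst p, snd s' - snd p) \<in> steps"
  then show ?thesis by blast
qed

lemma O_pred: assumes "reach \<omega> (0,0) t" "fst t \<ge> 1"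
  shows "\<exists>q. reach \<omega> (0,0) q \<and> \<omega> q \<and> inL q \<and> (fst t - fst q, snd t - snd q) \<in> steps"
  using reach_last[OF assms(1)] assms(2) by auto

lemma inv: "Vs \<omega> s \<Longrightarrow> reach \<omega> (0,0) t \<Longrightarrow> \<bar>fst s - fst t\<bar> \<le> 1 \<Longrightarrow> snd s < snd t"
proof (induction "nat (fst s + fst t)" arbitrary: s t rule: less_induct)
  case less
  have sL: "inL s" using less.prems(1) by (rule Vs_inL)
  have tL: "inL t" using reach_inL[OF less.prems(2)] by simp
  have st: "s \<noteq> t" using Vs_notO[OF less.prems(1)] less.prems(2) by auto
  consider "fst t = fst s + 1" | "fst s = fst t + 1" | "fst s = fst t" using less.prems(3) by linarith
  then show ?case
  proof cases
    case 1
    obtain q where q: "reach \<omega> (0,0) q" "\<omega> q" "inL q" "(fst t - fst q, snd t - snd q) \<in> steps"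
      using O_pred[OF less.prems(2)] 1 sL by (auto simp: inL_def)
    have "snd s < snd q"
      apply (rule less.hyps[OF _ less.prems(1) q(1)])
      using q sL 1 by (auto simp: inL_def steps_iff)
    then show ?thesis using q sL 1 by (auto simp: inL_def steps_iff; presburger)
  next
    case 2
    show ?thesis
    proof (cases "fst s \<ge> 2")
      case True
      obtain p where p: "Vs \<omega> p" "\<omega> p" "(fst s - fst p, snd s - snd p) \<in> steps"
        using Vs_pred[OF less.prems(1) True] by blast
      have pL: "inL p" using p(1) by (rule Vs_inL)
      have "snd p < snd t"
        apply (rule less.hyps[OF _ p(1) less.prems(2)])
        using p pL tL 2 by (auto simp: inL_def steps_iff)
      then show ?thesis using p pL tL 2 by (auto simp: inL_def steps_iff; presburger)
    next
      case False
      then have "fst t = 0" using 2 tL by (auto simp: inL_def)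
      then have "snd t = 0" using O_level0[of \<omega> "snd t"] less.prems(2) by (cases t) auto
      moreover have "snd s \<le> fst s - 2" using Vs_low[OF less.prems(1)] False by linarith
      ultimately show ?thesis using 2 \<open>fst t = 0\<close> by linarith
    qed
  next
    case 3
    show ?thesis
    proof (cases "fst s \<ge> 2")
      case True
      obtain p where p: "Vs \<omega> p" "\<omega> p" "(fst s - fst p, snd s - snd p) \<in> steps"
        using Vs_pred[OF less.prems(1) True] by blast
      have pL: "inL p" using p(1) by (rule Vs_inL)
      obtain q where q: "reach \<omega> (0,0) q" "\<omega> q" "inL q" "(fst t - fst q, snd t - snd q) \<in> steps"
        using O_pred[OF less.prems(2)] 3 True by auto
      have "snd p < snd q"
        apply (rule less.hyps[OF _ p(1) q(1)])
        using p pL q 3 by (auto simp: inL_def steps_iff)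
      moreover have "snd s \<noteq> snd t" using st 3 by (cases s, cases t) auto
      ultimately show ?thesis using p q sL tL 3 by (auto simp: inL_def steps_iff; presburger)
    next
      case False
      show ?thesis
      proof (cases "fst s = 0")
        case True
        then have "snd t = 0" using O_level0[of \<omega> "snd t"] less.prems(2) 3 by (cases t) auto
        moreover have "snd s \<le> fst s - 2" using Vs_low[OF less.prems(1)] False by linarith
        ultimately show ?thesis using True by linarith
      next
        case f: False
        then have f1: "fst s = 1" using False sL by (auto simp: inL_def)
        obtain q where q: "reach \<omega> (0,0) q" "\<omega> q" "inL q" "(fst t - fst q, snd t - snd q) \<in> steps"
          using O_pred[OF less.prems(2)] 3 f1 by auto
        have "snd s < snd q"
          apply (rule less.hyps[OF _ less.prems(1) q(1)])
          using q sL 3 f1 by (auto simp: inL_def steps_iff)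
        moreover have "snd s \<noteq> snd t" using st 3 by (cases s, cases t) auto
        ultimately show ?thesis using q sL tL 3 f1 by (auto simp: inL_def steps_iff; presburger)
      qed
    qed
  qed
qed

lemma reach_Vs: "reach \<omega> a b \<Longrightarrow> Vs \<omega> a \<Longrightarrow> \<not> reach \<omega> (0,0) b \<Longrightarrow> Vs \<omega> b"
proof (induction rule: reach.induct)
  case (refl z) then show ?case by simp
next
  case (step z z' z'')
  have "\<not> reach \<omega> (0,0) z'" using step.prems(2) step.hyps(5) reach_trans by blast
  then have "Vs \<omega> z'" using step by (auto intro: Vs.vstep)
  then show ?case using step by auto
qed

lemma core:
  assumes "\<forall>x. \<not> reach \<omega> (0,0) (int n, x)" "reach \<omega> (0,0) (int n - 1, r)"
    "fst s \<in> {0,1}" "snd s \<le> 0" "reach \<omega> s (int n, x')"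
  shows "x' < r"
proof -
  have "\<not> reach \<omega> (0,0) s" using assms(1,5) reach_trans by blast
  then have "Vs \<omega> s" using assms(3,4) reach_inL[OF assms(5)] by (auto intro: Vs.vstart)
  then have "Vs \<omega> (int n, x')" using reach_Vs assms(1,5) by blast
  from inv[OF this assms(2)] show ?thesis by simp
qed

definition mir :: "int \<times> int \<Rightarrow> int \<times> int" where "mir z = (fst z, - snd z)"

lemma reach_mir: "reach \<omega> a b \<Longrightarrow> reach (\<lambda>z. \<omega> (mir z)) (mir a) (mir b)"
proof (induction rule: reach.induct)
  case (refl z) then show ?case by (auto simp: mir_def inL_def intro!: reach.refl)
next
  case (step z z' z'')
  show ?case
    apply (rule reach.step[of _ _ "mir z'"])
    using step by (auto simp: mir_def inL_def steps_iff)
qed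

lemma mir_mir[simp]: "mir (mir z) = z" by (simp add: mir_def)

lemma core_right:
  assumes "\<forall>x. \<not> reach \<omega> (0,0) (int n, x)" "reach \<omega> (0,0) (int n - 1, r)"
    "fst s \<in> {0,1}" "snd s \<ge> 0" "reach \<omega> s (int n, x)"
  shows "r < x"
proof -
  let ?w = "\<lambda>z. \<omega> (mir z)"
  have a1: "\<forall>x. \<not> reach ?w (0,0) (int n, x)"
  proof
    fix x show "\<not> reach ?w (0,0) (int n, x)"
    proof
      assume "reach ?w (0,0) (int n, x)"
      from reach_mir[OF this] have "reach \<omega> (0,0) (int n, -x)" by (simp add: mir_def)
      with assms(1) show False by blast
    qed
  qed
  have a2: "reach ?w (0,0) (int n - 1, -r)" using reach_mir[OF assms(2)] by (simp add: mir_def)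
  have a5: "reach ?w (mir s) (int n, -x)" using reach_mir[OF assms(5)] by (simp add: mir_def)
  have "-x < -r" by (rule core[OF a1 a2 _ _ a5]) (use assms(3,4) in \<open>auto simp: mir_def\<close>)
  then show ?thesis by simp
qed

theorem lemma2p1:
  fixes \<omega> :: "int \<times> int \<Rightarrow> bool"
  shows "Inf {enat n | n. xi \<omega> n = {}} = Inf {enat m | m. l_bar \<omega> m > u_bar \<omega> m}"
proof -
  have BA: "xi \<omega> m = {}" if "l_bar \<omega> m > u_bar \<omega> m" for m
  proof (rule ccontr)
    assume "xi \<omega> m \<noteq> {}"
    then obtain x where x: "reach \<omega> (0,0) (int m, x)" by (auto simp: xi_def)
    have m0: "m \<noteq> 0" using that by (cases "m = 0") (auto simp: u_bar_def l_bar_def)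
    have "x \<in> xi_upper \<omega> m" "x \<in> xi_lower \<omega> m" using x by (auto simp: xi_upper_def xi_lower_def)
    then have "ereal (real_of_int x) \<le> u_bar \<omega> m" "l_bar \<omega> m \<le> ereal (real_of_int x)"
      using m0 by (auto simp: u_bar_def l_bar_def intro: Sup_upper Inf_lower)
    then show False using that by simp
  qed
  have AB: "l_bar \<omega> n > u_bar \<omega> n" if n: "xi \<omega> n = {}" "\<forall>k<n. xi \<omega> k \<noteq> {}" for n
  proof -
    have "n \<noteq> 0"
    proof
      assume "n = 0"
      then have "reach \<omega> (0,0) (int n, 0)" using reach.refl[of "(0,0)" \<omega>] by (simp add: inL_def)
      then show False using n(1) by (auto simp: xi_def)
    qed
    then have "xi \<omega> (n-1) \<noteq> {}" using n(2) by simp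
    then obtain r where r: "reach \<omega> (0,0) (int (n-1), r)" by (auto simp: xi_def)
    have r': "reach \<omega> (0,0) (int n - 1, r)" using r \<open>n \<noteq> 0\<close> by (simp add: of_nat_diff)
    have e: "\<forall>x. \<not> reach \<omega> (0,0) (int n, x)" using n(1) by (auto simp: xi_def)
    have "u_bar \<omega> n \<le> ereal (real_of_int (r - 1))"
      unfolding u_bar_def using \<open>n \<noteq> 0\<close>
    proof (simp, intro Sup_least)
      fix z assume "z \<in> (\<lambda>x. ereal (real_of_int x)) ` xi_upper \<omega> n"
      then obtain a where "z = ereal (real_of_int a)" "a \<in> xi_upper \<omega> n" by auto
      then obtain y where "y \<le> 0" "reach \<omega> (0,y) (int n, a) \<or> reach \<omega> (1,y) (int n, a)"
        by (auto simp: xi_upper_def)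
      then have "a < r" using core[OF e r'] by (metis fst_conv insertI1 insertI2 singletonI snd_conv)
      then show "z \<le> ereal (real_of_int r - 1)" using \<open>z = _\<close> by simp
    qed
    moreover have "ereal (real_of_int (r + 1)) \<le> l_bar \<omega> n"
      unfolding l_bar_def using \<open>n \<noteq> 0\<close>
    proof (simp, intro Inf_greatest)
      fix z assume "z \<in> (\<lambda>x. ereal (real_of_int x)) ` xi_lower \<omega> n"
      then obtain a where "z = ereal (real_of_int a)" "a \<in> xi_lower \<omega> n" by auto
      then obtain y where "y \<ge> 0" "reach \<omega> (0,y) (int n, a) \<or> reach \<omega> (1,y) (int n, a)"
        by (auto simp: xi_lower_def)
      then have "r < a" using core_right[OF e r'] by (metis fst_conv insertI1 insertI2 singletonI snd_conv)
      then show "ereal (real_of_int r + 1) \<le> z" using \<open>z = _\<close> by simp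
    qed
    moreover have "ereal (real_of_int (r - 1)) < ereal (real_of_int (r + 1))" by simp
    ultimately show ?thesis by (meson le_less_trans less_le_trans)
  qed
  show ?thesis
  proof (rule antisym)
    show "Inf {enat n | n. xi \<omega> n = {}} \<le> Inf {enat m | m. l_bar \<omega> m > u_bar \<omega> m}"
      by (rule Inf_superset_mono) (auto dest: BA)
  next
    show "Inf {enat m | m. l_bar \<omega> m > u_bar \<omega> m} \<le> Inf {enat n | n. xi \<omega> n = {}}"
    proof (rule Inf_greatest)
      fix z assume "z \<in> {enat n | n. xi \<omega> n = {}}"
      then obtain n where z: "z = enat n" "xi \<omega> n = {}" by auto
      let ?L = "LEAST k. xi \<omega> k = {}"
      have L: "xi \<omega> ?L = {}" using z(2) by (rule LeastI)
      have "\<forall>k<?L. xi \<omega> k \<noteq> {}" using not_less_Least by blast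
      then have "l_bar \<omega> ?L > u_bar \<omega> ?L" using AB L by blast
      then have "Inf {enat m | m. l_bar \<omega> m > u_bar \<omega> m} \<le> enat ?L" by (auto intro: Inf_lower)
      also have "enat ?L \<le> z" using z Least_le[of "\<lambda>k. xi \<omega> k = {}" n] by simp
      finally show "Inf {enat m | m. l_bar \<omega> m > u_bar \<omega> m} \<le> z" .
    qed
  qed
qed

end
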